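(* In the setting of the context, for every integer $m\ge 0$ there is a constant $C_m$ (depending on $m$ and on $p$, but not on $N$) such that for all $N\ge 1$, \[ |M_{2m+1}(N)| \;\le\; \frac{C_m}{\sqrt N}. \] In particular $\lim_{N\to\infty} M_{2m+1}(N)=0$.
   Context: Let $p$ be a probability density on $\mathbb{R}$ with mean $0$, variance $1$ and finite moments of all orders. For $N\ge 1$, let $b_1,\dots,b_{N-1}$ be independent random variables with density $p$, set $b_0=0$, and let $A=A_N$ be the $N\times N$ real symmetric Toeplitz matrix with entries $a_{ij}=b_{|i-j|}$ ($1\le i,j\le N$). Let $\lambda_1(A),\dots,\lambda_N(A)$ be its eigenvalues. For an integer $k\ge 0$ define $M_k(A,N)=N^{-(k/2+1)}\sum_{i=1}^N\lambda_i(A)^k = N^{-(k/2+1)}\,\mathrm{Trace}(A^k)$, and $M_k(N)=\mathbb{E}[M_k(A,N)]$, the expectation over the random entries. *)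

theory Defs
  imports "HOL-Probability.Probability" "Jordan_Normal_Form.Matrix"
begin

definition mat_trace :: "real mat \<Rightarrow> real" where
  "mat_trace A = (\<Sum>i<dim_row A. A $$ (i, i))"

text \<open>The N x N symmetric Toeplitz matrix with entries b_{|i-j|}, where b_0 = 0
  (indices are 0-based here; |i-j| is unaffected).\<close>
definition toeplitz_mat :: "nat \<Rightarrow> (nat \<Rightarrow> real) \<Rightarrow> real mat" where
  "toeplitz_mat N b = mat N N (\<lambda>(i, j). if i = j then 0 else b (nat \<bar>int i - int j\<bar>))"

definition entries_law :: "(real \<Rightarrow> real) \<Rightarrow> nat \<Rightarrow> (nat \<Rightarrow> real) measure" where
  "entries_law p N = PiM {1..N-1} (\<lambda>_. density lborel p)"

definition M_AN :: "nat \<Rightarrow> nat \<Rightarrow> (nat \<Rightarrow> real) \<Rightarrow> real" where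
  "M_AN k N b = real N powr (- (real k / 2 + 1)) * mat_trace (toeplitz_mat N b ^\<^sub>m k)"

definition M_N :: "(real \<Rightarrow> real) \<Rightarrow> nat \<Rightarrow> nat \<Rightarrow> real" where
  "M_N p k N = (\<integral>b. M_AN k N b \<partial>(entries_law p N))"

end

theory Submission
  imports Defs
begin

definition walks :: "nat \<Rightarrow> nat \<Rightarrow> (nat \<Rightarrow> nat) set" where
  "walks N k = PiE {..k} (\<lambda>_. {..<N})"

definition wprod :: "real mat \<Rightarrow> nat \<Rightarrow> (nat \<Rightarrow> nat) \<Rightarrow> real" where
  "wprod A k x = (\<Prod>t<k. A $$ (x t, x (Suc t)))"

lemma finite_walks[simp]: "finite (walks N k)"
  unfolding walks_def by (simp add: finite_PiE)

lemma pow_entry: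
  assumes A: "A \<in> carrier_mat N N"
  shows "i < N \<Longrightarrow> j < N \<Longrightarrow> (A ^\<^sub>m k) $$ (i, j) =
     (\<Sum>x\<in>{x \<in> walks N k. x 0 = i \<and> x k = j}. wprod A k x)"
proof (induction k arbitrary: j)
  case 0
  have "{x \<in> walks N 0. x 0 = i \<and> x 0 = j} = (if i = j then {(\<lambda>t\<in>{..0}. i)} else {})"
    using 0 by (auto simp: walks_def PiE_iff extensional_def fun_eq_iff)
  then show ?case using 0 A by (simp add: wprod_def)
next
  case (Suc k)
  have "(A ^\<^sub>m Suc k) $$ (i, j) = (\<Sum>l<N. (A ^\<^sub>m k) $$ (i, l) * A $$ (l, j))"
    using A Suc.prems by (simp add: scalar_prod_def atLeast0LessThan)
  also have "\<dots> = (\<Sum>l<N. \<Sum>y\<in>{x \<in> walks N k. x 0 = i \<and> x k = l}. wprod A k y * A $$ (l, j))"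
    using Suc by (simp add: sum_distrib_right)
  also have "\<dots> = (\<Sum>(l,y)\<in>Sigma {..<N} (\<lambda>l. {x \<in> walks N k. x 0 = i \<and> x k = l}). wprod A k y * A $$ (l, j))"
    by (rule sum.Sigma) auto
  also have "\<dots> = (\<Sum>x\<in>{x \<in> walks N (Suc k). x 0 = i \<and> x (Suc k) = j}. wprod A (Suc k) x)"
  proof (rule sum.reindex_bij_witness[where i = "\<lambda>x. (x k, x(Suc k := undefined))"
        and j = "\<lambda>(l,y). y(Suc k := j)"])
    fix a assume a: "a \<in> {x \<in> walks N (Suc k). x 0 = i \<and> x (Suc k) = j}"
    then show "(case (a k, a(Suc k := undefined)) of (l, y) \<Rightarrow> y(Suc k := j)) = a"
      by auto
    show "(a k, a(Suc k := undefined)) \<in> Sigma {..<N} (\<lambda>l. {x \<in> walks N k. x 0 = i \<and> x k = l})"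
      using a by (auto simp: walks_def PiE_iff extensional_def)
  next
    fix b assume b: "b \<in> Sigma {..<N} (\<lambda>l. {x \<in> walks N k. x 0 = i \<and> x k = l})"
    then obtain l y where b': "b = (l, y)" "l < N" "y \<in> walks N k" "y 0 = i" "y k = l" by auto
    have yS: "y (Suc k) = undefined" using b' by (auto simp: walks_def PiE_iff extensional_def)
    show "(case b of (l, y) \<Rightarrow> y(Suc k := j)) \<in> {x \<in> walks N (Suc k). x 0 = i \<and> x (Suc k) = j}"
      using b' Suc.prems by (auto simp: walks_def PiE_iff extensional_def)
    show "(case (case b of (l, y) \<Rightarrow> y(Suc k := j)) of x \<Rightarrow> (x k, x(Suc k := undefined))) = b"
      using b' yS by (auto simp: fun_eq_iff)
    have "wprod A (Suc k) (y(Suc k := j)) = wprod A k y * A $$ (l, j)"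
      unfolding wprod_def using b' by (simp add: lessThan_Suc)
    then show "wprod A (Suc k) (case b of (l, y) \<Rightarrow> y(Suc k := j)) = (case b of (l, y) \<Rightarrow> wprod A k y * A $$ (l, j))"
      using b' by simp
  qed
  finally show ?case .
qed

definition cwalks :: "nat \<Rightarrow> nat \<Rightarrow> (nat \<Rightarrow> nat) set" where
  "cwalks N k = {x \<in> walks N k. x k = x 0}"

lemma finite_cwalks[simp]: "finite (cwalks N k)"
  unfolding cwalks_def by simp

lemma trace_walks:
  assumes A: "A \<in> carrier_mat N N"
  shows "mat_trace (A ^\<^sub>m k) = (\<Sum>x\<in>cwalks N k. wprod A k x)"
proof -
  have "mat_trace (A ^\<^sub>m k) = (\<Sum>i<N. \<Sum>x\<in>{x \<in> walks N k. x 0 = i \<and> x k = i}. wprod A k x)"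
    unfolding mat_trace_def using A by (simp add: pow_entry)
  also have "\<dots> = (\<Sum>i<N. \<Sum>x\<in>cwalks N k. if x 0 = i then wprod A k x else 0)"
    by (rule sum.cong[OF refl], subst sum.inter_filter[symmetric]) (auto simp: cwalks_def intro!: sum.cong)
  also have "\<dots> = (\<Sum>x\<in>cwalks N k. \<Sum>i<N. if x 0 = i then wprod A k x else 0)"
    by (rule sum.swap)
  also have "\<dots> = (\<Sum>x\<in>cwalks N k. wprod A k x)"
  proof (rule sum.cong[OF refl])
    fix x assume "x \<in> cwalks N k"
    then have "x 0 < N" by (auto simp: cwalks_def walks_def PiE_iff)
    then show "(\<Sum>i<N. if x 0 = i then wprod A k x else 0) = wprod A k x"
      by (simp add: sum.delta)
  qed
  finally show ?thesis .
qed

definition Eb :: "(nat \<Rightarrow> real) \<Rightarrow> nat \<Rightarrow> real" where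
  "Eb b d = (if d = 0 then 0 else b d)"

definition Dw :: "(nat \<Rightarrow> nat) \<Rightarrow> nat \<Rightarrow> nat" where
  "Dw x t = nat \<bar>int (x t) - int (x (Suc t))\<bar>"

definition term_w :: "nat \<Rightarrow> (nat \<Rightarrow> nat) \<Rightarrow> (nat \<Rightarrow> real) \<Rightarrow> real" where
  "term_w k x b = (\<Prod>t<k. Eb b (Dw x t))"

lemma toeplitz_carrier: "toeplitz_mat N b \<in> carrier_mat N N"
  by (simp add: toeplitz_mat_def)

lemma wprod_toeplitz:
  assumes "x \<in> walks N k"
  shows "wprod (toeplitz_mat N b) k x = term_w k x b"
  unfolding wprod_def term_w_def
proof (rule prod.cong[OF refl])
  fix t assume "t \<in> {..<k}"
  then have "x t < N" "x (Suc t) < N" using assms by (auto simp: walks_def PiE_iff)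
  then show "toeplitz_mat N b $$ (x t, x (Suc t)) = Eb b (Dw x t)"
    by (auto simp: toeplitz_mat_def Eb_def Dw_def)
qed

lemma trace_toeplitz:
  "mat_trace (toeplitz_mat N b ^\<^sub>m k) = (\<Sum>x\<in>cwalks N k. term_w k x b)"
  by (simp add: trace_walks[OF toeplitz_carrier] wprod_toeplitz cwalks_def)

lemma Dw_le: "x \<in> walks N k \<Longrightarrow> t < k \<Longrightarrow> Dw x t \<le> N - 1"
proof -
  assume "x \<in> walks N k" "t < k"
  then have "x t < N" "x (Suc t) < N" by (auto simp: walks_def PiE_iff)
  then show ?thesis unfolding Dw_def by linarith
qed

lemma card_image_twice:
  assumes fin: "finite A" and tw: "\<And>a. a \<in> A \<Longrightarrow> \<exists>a'\<in>A. a' \<noteq> a \<and> f a' = f a"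
  shows "2 * card (f ` A) \<le> card A"
proof -
  have eq: "A = (\<Union>s\<in>f ` A. {a\<in>A. f a = s})" by auto
  have "card A = (\<Sum>s\<in>f ` A. card {a\<in>A. f a = s})"
    by (subst eq, rule card_UN_disjoint) (use fin in auto)
  moreover have "(\<Sum>s\<in>f ` A. 2) \<le> (\<Sum>s\<in>f ` A. card {a\<in>A. f a = s})"
  proof (rule sum_mono)
    fix s assume "s \<in> f ` A"
    then obtain a where a: "a \<in> A" "f a = s" by auto
    from tw[OF a(1)] obtain a' where a': "a' \<in> A" "a' \<noteq> a" "f a' = f a" by auto
    have "{a, a'} \<subseteq> {a\<in>A. f a = s}" using a a' by auto
    then have "card {a, a'} \<le> card {a\<in>A. f a = s}" by (rule card_mono[rotated]) (use fin in auto)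
    then show "2 \<le> card {a\<in>A. f a = s}" using a' by simp
  qed
  ultimately show ?thesis by simp
qed

definition good :: "nat \<Rightarrow> (nat \<Rightarrow> nat) \<Rightarrow> bool" where
  "good k x = (\<forall>t<k. Dw x t \<noteq> 0 \<and> (\<exists>t'<k. t' \<noteq> t \<and> Dw x t' = Dw x t))"

definition params :: "nat \<Rightarrow> nat \<Rightarrow> nat \<Rightarrow> (nat \<times> (nat \<Rightarrow> int) \<times> (nat \<Rightarrow> nat) \<times> (nat \<Rightarrow> nat)) set" where
  "params N k m = {..<N} \<times> (PiE {..<k} (\<lambda>_. {-1,1::int})) \<times> (PiE {..<k} (\<lambda>_. {..<m})) \<times> (PiE {..<m} (\<lambda>_. {..<N}))"

definition Fw :: "nat \<Rightarrow> (nat \<times> (nat \<Rightarrow> int) \<times> (nat \<Rightarrow> nat) \<times> (nat \<Rightarrow> nat)) \<Rightarrow> (nat \<Rightarrow> nat)" where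
  "Fw k = (\<lambda>(x0, s, r, w). (\<lambda>t\<in>{..k}. nat (int x0 + (\<Sum>i<t. s i * int (w (r i))))))"

lemma card_params: "card (params N k m) = N * 2 ^ k * m ^ k * N ^ m"
  by (simp add: params_def card_cartesian_product card_PiE numeral_2_eq_2)

lemma finite_params: "finite (params N k m)"
  by (simp add: params_def finite_PiE)

lemma good_in_image:
  assumes k: "k = 2 * m + 1" and x: "x \<in> walks N k" and g: "good k x"
  shows "x \<in> Fw k ` params N k m"
proof -
  define S where "S = Dw x ` {..<k}"
  have "2 * card S \<le> card {..<k}"
    unfolding S_def by (rule card_image_twice) (use g in \<open>auto simp: good_def\<close>)
  then have cS: "card S \<le> m" using k by simp
  have SN: "S \<subseteq> {..<N}"
  proof
    fix v assume "v \<in> S"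
    then obtain t where t: "t < k" "v = Dw x t" by (auto simp: S_def)
    then have "v \<le> N - 1" using Dw_le[OF x] by auto
    moreover have "N > 0" using x t by (auto simp: walks_def PiE_iff)
    ultimately show "v \<in> {..<N}" by auto
  qed
  have x0: "x 0 < N" using x by (auto simp: walks_def PiE_iff)
  have finS: "finite S" by (simp add: S_def)
  obtain h where h: "bij_betw h {0..<card S} S" using ex_bij_betw_nat_finite[OF finS] by blast
  define w where "w = (\<lambda>i\<in>{..<m}. if i < card S then h i else 0)"
  define r where "r = (\<lambda>t\<in>{..<k}. inv_into {0..<card S} h (Dw x t))"
  define s where "s = (\<lambda>t\<in>{..<k}. if x t \<le> x (Suc t) then (1::int) else -1)"
  have hS: "h ` {0..<card S} = S" using h by (simp add: bij_betw_def)
  have rt: "r t < card S" "h (r t) = Dw x t" if "t < k" for t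
  proof -
    have "Dw x t \<in> h ` {0..<card S}" using that hS by (auto simp: S_def)
    then have "inv_into {0..<card S} h (Dw x t) \<in> {0..<card S}" by (rule inv_into_into)
    then show "r t < card S" using that by (simp add: r_def)
    show "h (r t) = Dw x t" using that \<open>Dw x t \<in> h ` {0..<card S}\<close>
      by (simp add: r_def f_inv_into_f)
  qed
  have wr: "w (r t) = Dw x t" if "t < k" for t
    using rt[OF that] cS by (simp add: w_def)
  have sw: "s t * int (w (r t)) = int (x (Suc t)) - int (x t)" if "t < k" for t
    using that by (simp add: wr s_def Dw_def)
  have rm: "r t < m" if "t < k" for t using rt(1)[OF that] cS by linarith
  have wN: "w i < N" if "i < m" for i
  proof (cases "i < card S")
    case True
    then have "h i \<in> S" using hS by auto
    then show ?thesis using SN that True by (auto simp: w_def)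
  qed (use x0 that in \<open>auto simp: w_def\<close>)
  have par: "(x 0, s, r, w) \<in> params N k m"
    unfolding params_def using x0 rm wN
    by (auto simp: s_def w_def PiE_iff) (auto simp: r_def)
  have "Fw k (x 0, s, r, w) = x"
  proof
    fix t
    show "Fw k (x 0, s, r, w) t = x t"
    proof (cases "t \<le> k")
      case True
      have "(\<Sum>i<t. s i * int (w (r i))) = (\<Sum>i<t. int (x (Suc i)) - int (x i))"
        using True by (intro sum.cong) (auto simp: sw)
      also have "\<dots> = int (x t) - int (x 0)" by (rule sum_lessThan_telescope)
      finally show ?thesis using True by (simp add: Fw_def)
    next
      case False
      then show ?thesis using x by (auto simp: Fw_def walks_def PiE_iff extensional_def)
    qed
  qed
  then show ?thesis using par by force
qed

lemma card_good:
  assumes k: "k = 2 * m + 1"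
  shows "card {x \<in> cwalks N k. good k x} \<le> N * 2 ^ k * m ^ k * N ^ m"
proof -
  have "{x \<in> cwalks N k. good k x} \<subseteq> Fw k ` params N k m"
    using good_in_image[OF k] by (auto simp: cwalks_def)
  then have "card {x \<in> cwalks N k. good k x} \<le> card (Fw k ` params N k m)"
    by (intro card_mono) (auto simp: finite_params)
  also have "\<dots> \<le> card (params N k m)" by (rule card_image_le[OF finite_params])
  finally show ?thesis by (simp add: card_params)
qed

lemma prod_abs_le_sum_pow:
  fixes a :: "nat \<Rightarrow> real"
  assumes "k \<ge> 1"
  shows "\<bar>\<Prod>t<k. a t\<bar> \<le> (\<Sum>t<k. \<bar>a t\<bar> ^ k)"
proof -
  define M where "M = Max ((\<lambda>t. \<bar>a t\<bar>) ` {..<k})"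
  have ne: "{..<k} \<noteq> {}" using assms by (simp add: lessThan_empty_iff)
  have "M \<in> (\<lambda>t. \<bar>a t\<bar>) ` {..<k}" unfolding M_def by (rule Max_in) (use ne in auto)
  then obtain t0 where t0: "t0 < k" "M = \<bar>a t0\<bar>" by auto
  have "\<bar>\<Prod>t<k. a t\<bar> = (\<Prod>t<k. \<bar>a t\<bar>)" by (simp add: abs_prod)
  also have "\<dots> \<le> (\<Prod>t<k. M)"
    by (intro prod_mono) (auto simp: M_def)
  also have "\<dots> = \<bar>a t0\<bar> ^ k" using t0 by simp
  also have "\<dots> \<le> (\<Sum>t<k. \<bar>a t\<bar> ^ k)"
    by (rule member_le_sum) (use t0 in auto)
  finally show ?thesis .
qed

context
  fixes p :: "real \<Rightarrow> real"
  assumes p_meas: "p \<in> borel_measurable lborel"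
    and p_nonneg: "\<And>x. 0 \<le> p x"
    and p_prob: "(\<integral>\<^sup>+ x. ennreal (p x) \<partial>lborel) = 1"
    and p_moments: "\<And>k::nat. integrable lborel (\<lambda>x. \<bar>x\<bar> ^ k * p x)"
    and p_mean: "(\<integral>x. x * p x \<partial>lborel) = 0"
begin

lemma prob_Mp: "prob_space (density lborel p)"
proof (rule prob_spaceI)
  have "emeasure (density lborel p) (space (density lborel p)) = (\<integral>\<^sup>+ x. ennreal (p x) * indicator UNIV x \<partial>lborel)"
    using p_meas by (simp add: emeasure_density)
  then show "emeasure (density lborel p) (space (density lborel p)) = 1"
    using p_prob by simp
qed

lemma prob_Omega: "prob_space (entries_law p N)"
  unfolding entries_law_def by (rule prob_space_PiM) (rule prob_Mp)

lemma comp_meas: "v \<in> {1..N-1} \<Longrightarrow> (\<lambda>b. b v) \<in> measurable (entries_law p N) (density lborel p)"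
  unfolding entries_law_def by (rule measurable_component_singleton)

lemma comp_distr: "v \<in> {1..N-1} \<Longrightarrow> distr (entries_law p N) (density lborel p) (\<lambda>b. b v) = density lborel p"
  unfolding entries_law_def by (rule distr_PiM_component) (auto intro: prob_Mp)

lemma comp_integrable:
  fixes g :: "real \<Rightarrow> real"
  assumes v: "v \<in> {1..N-1}" and g: "g \<in> borel_measurable borel" "integrable (density lborel p) g"
  shows "integrable (entries_law p N) (\<lambda>b. g (b v))"
proof -
  have "integrable (distr (entries_law p N) (density lborel p) (\<lambda>b. b v)) g"
    using g by (simp add: comp_distr[OF v])
  moreover have gm: "g \<in> borel_measurable (density lborel p)" using g(1) by simp
  ultimately show ?thesis using integrable_distr_eq[OF comp_meas[OF v] gm] by simp
qed

lemma comp_integral: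
  fixes g :: "real \<Rightarrow> real"
  assumes v: "v \<in> {1..N-1}" and g: "g \<in> borel_measurable borel"
  shows "(\<integral>b. g (b v) \<partial>entries_law p N) = (\<integral>y. g y \<partial>density lborel p)"
proof -
  have "(\<integral>y. g y \<partial>density lborel p) = (\<integral>y. g y \<partial>distr (entries_law p N) (density lborel p) (\<lambda>b. b v))"
    by (simp add: comp_distr[OF v])
  also have "\<dots> = (\<integral>b. g (b v) \<partial>entries_law p N)"
  proof -
    have gm: "g \<in> borel_measurable (density lborel p)" using g(1) by simp
    show ?thesis using integral_distr[OF comp_meas[OF v] gm] by simp
  qed
  finally show ?thesis by simp
qed

lemma Mp_moment: "integrable (density lborel p) (\<lambda>y. \<bar>y\<bar> ^ n)"
  using p_moments[of n] p_meas p_nonneg by (subst integrable_density) (auto simp: mult.commute)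

lemma Mp_mean: "(\<integral>y. y \<partial>density lborel p) = 0"
  using p_mean p_meas p_nonneg by (subst integral_density) (auto simp: mult.commute)

lemma Eb_meas:
  assumes "d \<le> N - 1"
  shows "(\<lambda>b. Eb b d) \<in> borel_measurable (entries_law p N)"
proof (cases "d = 0")
  case True then show ?thesis by (simp add: Eb_def)
next
  case False
  then have v: "d \<in> {1..N-1}" using assms by auto
  have "(\<lambda>y::real. y) \<in> borel_measurable (density lborel p)" by simp
  from measurable_compose[OF comp_meas[OF v] this] show ?thesis
    using False by (simp add: Eb_def)
qed

lemma term_meas:
  assumes "x \<in> walks N k"
  shows "term_w k x \<in> borel_measurable (entries_law p N)"
proof -
  have "(\<lambda>b. \<Prod>t<k. Eb b (Dw x t)) \<in> borel_measurable (entries_law p N)"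
    by (rule borel_measurable_prod) (use Eb_meas Dw_le[OF assms] in auto)
  then show ?thesis by (simp add: term_w_def[abs_def])
qed

definition mu :: "nat \<Rightarrow> real" where
  "mu k = (\<integral>y. \<bar>y\<bar> ^ k \<partial>density lborel p)"

lemma mu_nonneg: "0 \<le> mu k"
  unfolding mu_def by (rule integral_nonneg_AE) auto

lemma Eb_pow:
  assumes "d \<le> N - 1" "k \<ge> 1"
  shows "integrable (entries_law p N) (\<lambda>b. \<bar>Eb b d\<bar> ^ k)"
    "(\<integral>b. \<bar>Eb b d\<bar> ^ k \<partial>entries_law p N) \<le> mu k"
proof -
  have "integrable (entries_law p N) (\<lambda>b. \<bar>Eb b d\<bar> ^ k) \<and> (\<integral>b. \<bar>Eb b d\<bar> ^ k \<partial>entries_law p N) \<le> mu k"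
  proof (cases "d = 0")
    case True
    have "0 < k" using assms by simp
    then show ?thesis using mu_nonneg True by (simp add: Eb_def zero_power)
  next
    case False
    then have v: "d \<in> {1..N-1}" using assms by auto
    have g: "(\<lambda>y::real. \<bar>y\<bar> ^ k) \<in> borel_measurable borel" by simp
    show ?thesis
      using comp_integrable[OF v g Mp_moment] comp_integral[OF v g] False
      by (simp add: Eb_def mu_def)
  qed
  then show "integrable (entries_law p N) (\<lambda>b. \<bar>Eb b d\<bar> ^ k)"
    "(\<integral>b. \<bar>Eb b d\<bar> ^ k \<partial>entries_law p N) \<le> mu k" by auto
qed

lemma term_int:
  assumes x: "x \<in> walks N k" and k: "k \<ge> 1"
  shows "integrable (entries_law p N) (term_w k x)"
    "\<bar>\<integral>b. term_w k x b \<partial>entries_law p N\<bar> \<le> k * mu k"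
proof -
  have ints: "integrable (entries_law p N) (\<lambda>b. \<bar>Eb b (Dw x t)\<bar> ^ k)" if "t < k" for t
    using Eb_pow(1)[OF Dw_le[OF x that] k] .
  have sint: "integrable (entries_law p N) (\<lambda>b. \<Sum>t<k. \<bar>Eb b (Dw x t)\<bar> ^ k)"
    by (rule Bochner_Integration.integrable_sum) (use ints in auto)
  have pt: "\<bar>term_w k x b\<bar> \<le> (\<Sum>t<k. \<bar>Eb b (Dw x t)\<bar> ^ k)" for b
    unfolding term_w_def by (rule prod_abs_le_sum_pow[OF k])
  show ti: "integrable (entries_law p N) (term_w k x)"
  proof (rule Bochner_Integration.integrable_bound[OF sint term_meas[OF x]])
    show "AE b in entries_law p N. norm (term_w k x b) \<le> norm (\<Sum>t<k. \<bar>Eb b (Dw x t)\<bar> ^ k)"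
    proof (rule AE_I2)
      fix b
      have "\<bar>term_w k x b\<bar> \<le> \<bar>\<Sum>t<k. \<bar>Eb b (Dw x t)\<bar> ^ k\<bar>"
        using pt[of b] by linarith
      then show "norm (term_w k x b) \<le> norm (\<Sum>t<k. \<bar>Eb b (Dw x t)\<bar> ^ k)" by simp
    qed
  qed
  have "\<bar>\<integral>b. term_w k x b \<partial>entries_law p N\<bar> \<le> (\<integral>b. \<bar>term_w k x b\<bar> \<partial>entries_law p N)"
    by (rule integral_abs_bound)
  also have "\<dots> \<le> (\<integral>b. (\<Sum>t<k. \<bar>Eb b (Dw x t)\<bar> ^ k) \<partial>entries_law p N)"
    by (rule Bochner_Integration.integral_mono) (use ti sint pt in auto)
  also have "\<dots> = (\<Sum>t<k. \<integral>b. \<bar>Eb b (Dw x t)\<bar> ^ k \<partial>entries_law p N)"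
    by (rule Bochner_Integration.integral_sum) (use ints in auto)
  also have "\<dots> \<le> (\<Sum>t<k. mu k)"
    by (rule sum_mono) (use Eb_pow(2)[OF Dw_le[OF x] k] in auto)
  finally show "\<bar>\<integral>b. term_w k x b \<partial>entries_law p N\<bar> \<le> k * mu k" by simp
qed

lemma zero_int:
  assumes v: "v \<in> {1..N-1}" and f: "integrable (entries_law p N) f"
    and fh: "\<And>b y. f (b(v := y)) = y * h b"
  shows "(\<integral>b. f b \<partial>entries_law p N) = 0"
proof -
  interpret product_sigma_finite "\<lambda>_. density lborel p"
    by (simp add: product_sigma_finite_def prob_space_imp_sigma_finite prob_Mp)
  define J where "J = {1..N-1} - {v}"
  have eq: "{1..N-1} = insert v J" using v by (auto simp: J_def)
  have fi: "integrable (Pi\<^sub>M (insert v J) (\<lambda>_. density lborel p)) f"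
    using f unfolding entries_law_def eq by assumption
  have "(\<integral>b. f b \<partial>entries_law p N) = (\<integral>x. (\<integral>y. f (x(v:=y)) \<partial>density lborel p) \<partial>Pi\<^sub>M J (\<lambda>_. density lborel p))"
    unfolding entries_law_def eq by (rule product_integral_insert) (use fi in \<open>auto simp: J_def\<close>)
  also have "\<dots> = (\<integral>x. 0 \<partial>Pi\<^sub>M J (\<lambda>_. density lborel p))"
  proof (rule Bochner_Integration.integral_cong[OF refl])
    fix x
    have "(\<integral>y. f (x(v:=y)) \<partial>density lborel p) = (\<integral>y. y * h x \<partial>density lborel p)"
      by (simp only: fh)
    also have "\<dots> = (\<integral>y. y \<partial>density lborel p) * h x" by (rule integral_mult_left_zero)
    also have "\<dots> = 0" by (simp only: Mp_mean mult_zero_left)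
    finally show "(\<integral>y. f (x(v:=y)) \<partial>density lborel p) = 0" .
  qed
  finally show ?thesis by simp
qed

lemma term_zero:
  assumes x: "x \<in> walks N k" and ng: "\<not> good k x"
  shows "(\<integral>b. term_w k x b \<partial>entries_law p N) = 0"
proof (cases "\<exists>t<k. Dw x t = 0")
  case True
  then obtain t where t: "t < k" "Dw x t = 0" by auto
  have "term_w k x = (\<lambda>b. 0)"
  proof
    fix b
    show "term_w k x b = 0" unfolding term_w_def
      by (intro prod_zero finite_lessThan bexI[of _ t]) (simp_all add: t Eb_def)
  qed
  then show ?thesis by simp
next
  case False
  have "\<exists>t0<k. \<not> (\<exists>t'<k. t' \<noteq> t0 \<and> Dw x t' = Dw x t0)"
  proof (rule ccontr)
    assume "\<not> (\<exists>t0<k. \<not> (\<exists>t'<k. t' \<noteq> t0 \<and> Dw x t' = Dw x t0))"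
    then have "good k x" using False unfolding good_def by simp
    then show False using ng by simp
  qed
  then obtain t0 where t0: "t0 < k" "\<And>t. t < k \<Longrightarrow> t \<noteq> t0 \<Longrightarrow> Dw x t \<noteq> Dw x t0"
    by auto
  define v where "v = Dw x t0"
  have v: "v \<in> {1..N-1}" using False t0 Dw_le[OF x t0(1)] by (auto simp: v_def)
  have k: "k \<ge> 1" using t0 by simp
  show ?thesis
  proof (rule zero_int[OF v term_int(1)[OF x k]])
    fix b y
    have "term_w k x (b(v := y)) = Eb (b(v := y)) (Dw x t0) * (\<Prod>t\<in>{..<k} - {t0}. Eb (b(v := y)) (Dw x t))"
      unfolding term_w_def by (rule prod.remove) (use t0 in auto)
    also have "\<dots> = y * (\<Prod>t\<in>{..<k} - {t0}. Eb b (Dw x t))"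
    proof -
      have e1: "Eb (b(v:=y)) (Dw x t0) = y" using v by (simp add: Eb_def v_def)
      have e2: "(\<Prod>t\<in>{..<k} - {t0}. Eb (b(v:=y)) (Dw x t)) = (\<Prod>t\<in>{..<k} - {t0}. Eb b (Dw x t))"
        by (rule prod.cong[OF refl]) (use t0 in \<open>auto simp: Eb_def v_def\<close>)
      show ?thesis by (simp only: e1 e2)
    qed
    finally show "term_w k x (b(v := y)) = y * (\<Prod>t\<in>{..<k} - {t0}. Eb b (Dw x t))" .
  qed
qed

lemma powr_calc:
  assumes N: "N \<ge> 1" and k: "k = 2 * m + 1"
  shows "real N powr (- (real k / 2 + 1)) * real N ^ (m + 1) = 1 / sqrt (real N)"
proof -
  have Np: "real N > 0" using N by simp
  have "real N powr (- (real k / 2 + 1)) * real N ^ (m + 1) = real N powr (- (real k / 2 + 1)) * real N powr real (m + 1)"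
    by (simp only: powr_realpow[OF Np])
  also have "\<dots> = real N powr (- (real k / 2 + 1) + real (m + 1))" by (rule powr_add[symmetric])
  also have "- (real k / 2 + 1) + real (m + 1) = - (1/2)" using k by (simp add: field_simps)
  also have "real N powr (- (1/2)) = 1 / real N powr (1/2)" by (simp add: powr_minus_divide)
  also have "\<dots> = 1 / sqrt (real N)" by (simp add: powr_half_sqrt)
  finally show ?thesis .
qed

lemma main_bound:
  assumes k: "k = 2 * m + 1" and N: "N \<ge> 1"
  shows "\<bar>M_N p k N\<bar> \<le> (2 ^ k * real m ^ k * (k * mu k)) / sqrt (real N)"
proof -
  let ?O = "entries_law p N"
  let ?G = "{x \<in> cwalks N k. good k x}"
  have k1: "k \<ge> 1" using k by simp
  have cw: "x \<in> walks N k" if "x \<in> cwalks N k" for x using that by (simp add: cwalks_def)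
  have "M_N p k N = real N powr (- (real k / 2 + 1)) * (\<integral>b. (\<Sum>x\<in>cwalks N k. term_w k x b) \<partial>?O)"
    unfolding M_N_def M_AN_def trace_toeplitz by simp
  also have "(\<integral>b. (\<Sum>x\<in>cwalks N k. term_w k x b) \<partial>?O) = (\<Sum>x\<in>cwalks N k. \<integral>b. term_w k x b \<partial>?O)"
    by (rule Bochner_Integration.integral_sum) (use term_int(1)[OF cw k1] in auto)
  finally have eq: "M_N p k N = real N powr (- (real k / 2 + 1)) * (\<Sum>x\<in>cwalks N k. \<integral>b. term_w k x b \<partial>?O)" .
  have "\<bar>\<Sum>x\<in>cwalks N k. \<integral>b. term_w k x b \<partial>?O\<bar> \<le> (\<Sum>x\<in>cwalks N k. \<bar>\<integral>b. term_w k x b \<partial>?O\<bar>)"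
    by (rule sum_abs)
  also have "\<dots> = (\<Sum>x\<in>?G. \<bar>\<integral>b. term_w k x b \<partial>?O\<bar>)"
    by (rule sum.mono_neutral_right) (auto simp: term_zero cw)
  also have "\<dots> \<le> (\<Sum>x\<in>?G. k * mu k)"
    by (rule sum_mono) (auto intro: term_int(2)[OF cw k1])
  also have "\<dots> = real (card ?G) * (k * mu k)" by simp
  also have "\<dots> \<le> real (N * 2 ^ k * m ^ k * N ^ m) * (k * mu k)"
  proof (rule mult_right_mono)
    show "real (card ?G) \<le> real (N * 2 ^ k * m ^ k * N ^ m)"
      using card_good[OF k, of N] by (simp only: of_nat_le_iff)
    show "0 \<le> real k * mu k" using mu_nonneg by simp
  qed
  finally have bnd: "\<bar>\<Sum>x\<in>cwalks N k. \<integral>b. term_w k x b \<partial>?O\<bar> \<le> real N ^ (m + 1) * (2 ^ k * real m ^ k * (k * mu k))"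
    by (simp add: algebra_simps)
  have pos: "real N powr (- (real k / 2 + 1)) \<ge> 0" by simp
  have "\<bar>M_N p k N\<bar> = real N powr (- (real k / 2 + 1)) * \<bar>\<Sum>x\<in>cwalks N k. \<integral>b. term_w k x b \<partial>?O\<bar>"
    unfolding eq by (simp add: abs_mult)
  also have "\<dots> \<le> real N powr (- (real k / 2 + 1)) * (real N ^ (m + 1) * (2 ^ k * real m ^ k * (k * mu k)))"
    by (rule mult_left_mono[OF bnd pos])
  also have "\<dots> = (real N powr (- (real k / 2 + 1)) * real N ^ (m + 1)) * (2 ^ k * real m ^ k * (k * mu k))"
    by (simp add: algebra_simps)
  also have "\<dots> = (1 / sqrt (real N)) * (2 ^ k * real m ^ k * (k * mu k))"
    by (simp only: powr_calc[OF N k])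
  also have "\<dots> = (2 ^ k * real m ^ k * (k * mu k)) / sqrt (real N)" by simp
  finally show ?thesis .
qed

end

theorem mainTheorem2:
  fixes p :: "real \<Rightarrow> real"
  assumes p_meas: "p \<in> borel_measurable lborel"
    and p_nonneg: "\<And>x. 0 \<le> p x"
    and p_prob: "(\<integral>\<^sup>+ x. ennreal (p x) \<partial>lborel) = 1"
    and p_moments: "\<And>k::nat. integrable lborel (\<lambda>x. \<bar>x\<bar> ^ k * p x)"
    and p_mean: "(\<integral>x. x * p x \<partial>lborel) = 0"
    and p_var: "(\<integral>x. x\<^sup>2 * p x \<partial>lborel) = 1"
  shows "\<forall>m::nat. (\<exists>C::real. \<forall>N::nat. N \<ge> 1 \<longrightarrow>
            \<bar>M_N p (2 * m + 1) N\<bar> \<le> C / sqrt (real N))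
          \<and> (\<lambda>N. M_N p (2 * m + 1) N) \<longlonglongrightarrow> 0"
proof (intro allI conjI)
  fix m :: nat
  define K where "K = 2 ^ (2 * m + 1) * real m ^ (2 * m + 1) * (real (2 * m + 1) * mu p (2 * m + 1))"
  have b: "\<bar>M_N p (2 * m + 1) N\<bar> \<le> K / sqrt (real N)" if "N \<ge> 1" for N
    unfolding K_def by (rule main_bound[OF p_meas p_nonneg p_prob p_moments p_mean refl that])
  show "\<exists>C::real. \<forall>N::nat. N \<ge> 1 \<longrightarrow> \<bar>M_N p (2 * m + 1) N\<bar> \<le> C / sqrt (real N)"
    using b by blast
  show "(\<lambda>N. M_N p (2 * m + 1) N) \<longlonglongrightarrow> 0"
  proof (rule Lim_null_comparison)
    show "eventually (\<lambda>N. norm (M_N p (2 * m + 1) N) \<le> K / sqrt (real N)) sequentially"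
      unfolding eventually_sequentially using b by auto
    have "(\<lambda>N. inverse (sqrt (real N))) \<longlonglongrightarrow> 0"
      by (rule tendsto_inverse_0_at_top) (rule filterlim_compose[OF sqrt_at_top filterlim_real_sequentially])
    then have "(\<lambda>N. K * inverse (sqrt (real N))) \<longlonglongrightarrow> 0" by (rule tendsto_mult_right_zero)
    then show "(\<lambda>N. K / sqrt (real N)) \<longlonglongrightarrow> 0" by (simp add: divide_inverse)
  qed
qed

end
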